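(* Let $d, n \in \mathbb{N}$ and let $k$ be an integer with $0 \leq k \leq d$. The minimum number of $k$-dimensional affine subspaces of $\mathbb{R}^d$ whose union contains the lattice cube $\{0,\ldots,n-1\}^d$ is $n^{d-k}$.
   Context: The lattice cube $\{0,\ldots,n-1\}^d$ is viewed as a subset of $\mathbb{R}^d$. *)

theory Defs
  imports "HOL-Analysis.Analysis"
begin

definition lattice_cube :: "nat \<Rightarrow> (real ^ 'd) set" where
  "lattice_cube n = {x. \<forall>i. x $ i \<in> real ` {0..<n}}"

end

theory Submission
  imports Defs
begin

lemma coord_choice:
  fixes V :: "(real ^ 'd) set"
  assumes "subspace V" "dim V = k"
  shows "\<exists>I. card I = k \<and> (\<forall>x\<in>V. (\<forall>i\<in>I. x $ i = 0) \<longrightarrow> x = 0)"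
proof -
  obtain BV where BV: "BV \<subseteq> V" "independent BV" "V \<subseteq> span BV" "card BV = dim V"
    by (rule basis_exists)
  obtain B where B: "BV \<subseteq> B" "B \<subseteq> BV \<union> Basis" "independent B" "BV \<union> Basis \<subseteq> span B"
    using maximal_independent_subset_extend[of BV "BV \<union> Basis"] BV(2) by blast
  have finB: "finite B" using B(3) finiteI_independent by blast
  have spanB: "span B = UNIV"
    using B(4) span_Basis by (metis span_mono span_span sup.boundedE top.extremum_uniqueI)
  have cardB: "card B = CARD('d)"
    using dim_eq_card_independent[OF B(3)] spanB
    by (metis dim_UNIV dim_span DIM_cart DIM_real mult_1_right)
  define E where "E = B - BV"
  have E: "E \<subseteq> Basis" using B E_def by auto
  have indE: "independent E" using B(3) E_def independent_mono by blast
  have cardE: "card E = CARD('d) - k"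
    using cardB BV(4) assms(2) E_def B(1) finB by (simp add: card_Diff_subset finite_subset)
  have sub: "subspace (span E)" by simp
  have sums: "{x + y |x y. x \<in> V \<and> y \<in> span E} = UNIV"
  proof -
    have "span B \<subseteq> {x + y |x y. x \<in> V \<and> y \<in> span E}"
    proof -
      have "B = BV \<union> E" using B(1) E_def by auto
      then have "span B = {x + y |x y. x \<in> span BV \<and> y \<in> span E}" by (simp add: span_Un)
      moreover have "span BV = V" using BV assms(1) by (meson span_minimal span_mono span_subspace subset_antisym subset_trans)
      ultimately show ?thesis by auto
    qed
    then show ?thesis using spanB by auto
  qed
  have "dim {x + y |x y. x \<in> V \<and> y \<in> span E} + dim (V \<inter> span E) = dim V + dim (span E)"
    by (rule dim_sums_Int[OF assms(1) sub])
  moreover have "dim (span E) = CARD('d) - k" using dim_eq_card_independent[OF indE] cardE by simp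
  moreover have "k \<le> CARD('d)" using assms(2) dim_subset_UNIV[of V] by (metis DIM_cart DIM_real mult_1_right)
  ultimately have "dim (V \<inter> span E) = 0" using sums assms(2) by (simp add: DIM_cart)
  then have VE: "V \<inter> span E \<subseteq> {0}" by simp
  define I where "I = {i. axis i (1::real) \<notin> E}"
  have "card {i. axis i (1::real) \<in> E} = card E"
  proof -
    have "bij_betw (\<lambda>i. axis i (1::real)) {i. axis i 1 \<in> E} E"
      unfolding bij_betw_def
    proof
      show "inj_on (\<lambda>i. axis i (1::real)) {i. axis i 1 \<in> E}" by (auto simp: inj_on_def axis_eq_axis)
      show "(\<lambda>i. axis i 1) ` {i. axis i (1::real) \<in> E} = E"
        using E by (auto simp: Basis_vec_def)
    qed
    then show ?thesis by (rule bij_betw_same_card)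
  qed
  moreover have "I = UNIV - {i. axis i (1::real) \<in> E}" by (auto simp: I_def)
  ultimately have "card I = CARD('d) - card E" by (simp add: card_Diff_subset)
  then have cI: "card I = k" using cardE \<open>k \<le> CARD('d)\<close> by simp
  have "\<forall>x\<in>V. (\<forall>i\<in>I. x $ i = 0) \<longrightarrow> x = 0"
  proof (intro ballI impI)
    fix x assume x: "x \<in> V" "\<forall>i\<in>I. x $ i = 0"
    have "x \<in> span E"
      unfolding span_substd_basis[OF E]
    proof (clarify)
      fix b assume b: "b \<in> Basis" "b \<notin> E"
      then obtain i where "b = axis i 1" by (auto simp: Basis_vec_def)
      then show "x \<bullet> b = 0" using b x(2) I_def by (simp add: cart_eq_inner_axis[symmetric])
    qed
    then show "x = 0" using VE x(1) by auto
  qed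
  then show ?thesis using cI by blast
qed


lemma real_nat_floor: "x \<in> real ` {0..<n} \<Longrightarrow> real (nat \<lfloor>x\<rfloor>) = x \<and> nat \<lfloor>x\<rfloor> < n"
  by auto

lemma flat_card_le:
  fixes S :: "(real ^ 'd) set"
  assumes "affine S" "aff_dim S = int k"
  shows "card (S \<inter> lattice_cube n) \<le> n ^ k"
proof -
  have "S \<noteq> {}" using assms(2) by auto
  then obtain a where a: "a \<in> S" by blast
  define V where "V = (\<lambda>x. x - a) ` S"
  have subV: "subspace V" unfolding V_def by (rule affine_diffs_subspace_subtract[OF assms(1) a])
  have "int (dim V) = int k"
    using aff_dim_subspace[OF subV] aff_dim_translation_eq_subtract[of a S] assms(2) V_def by simp
  then have "dim V = k" by simp
  then obtain I where I: "card I = k" "\<forall>x\<in>V. (\<forall>i\<in>I. x $ i = 0) \<longrightarrow> x = 0"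
    using coord_choice[OF subV] by blast
  define f where "f = (\<lambda>p::real^'d. restrict (\<lambda>i. nat \<lfloor>p $ i\<rfloor>) I)"
  have fl: "\<And>p i. p \<in> lattice_cube n \<Longrightarrow> real (nat \<lfloor>p $ i\<rfloor>) = p $ i \<and> nat \<lfloor>p $ i\<rfloor> < n"
    unfolding lattice_cube_def using real_nat_floor by blast
  have "inj_on f (S \<inter> lattice_cube n)"
  proof (rule inj_onI)
    fix p q assume p: "p \<in> S \<inter> lattice_cube n" and q: "q \<in> S \<inter> lattice_cube n" and e: "f p = f q"
    have "\<forall>i\<in>I. (p - q) $ i = 0"
    proof
      fix i assume "i \<in> I"
      then have "nat \<lfloor>p $ i\<rfloor> = nat \<lfloor>q $ i\<rfloor>" using e unfolding f_def by (metis restrict_apply')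
      then show "(p - q) $ i = 0" using fl[of p i] fl[of q i] p q by (metis IntD2 diff_self vector_minus_component)
    qed
    moreover have "p - q \<in> V"
    proof -
      have pa: "p - a \<in> V" and qa: "q - a \<in> V" using p q unfolding V_def by auto
      have "(p - a) - (q - a) \<in> V" using subspace_diff[OF subV pa qa] .
      then show ?thesis by simp
    qed
    ultimately show "p = q" using I(2) by auto
  qed
  moreover have "f ` (S \<inter> lattice_cube n) \<subseteq> PiE I (\<lambda>_. {0..<n})"
    using fl unfolding f_def by (auto simp: PiE_iff) blast
  ultimately have "card (S \<inter> lattice_cube n) \<le> card (PiE I (\<lambda>_. {0..<n}))"
    by (intro card_inj_on_le) (auto intro: finite_PiE)
  also have "\<dots> = n ^ k" using I(1) by (simp add: card_PiE)
  finally show ?thesis .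
qed

lemma cube_card: "finite (lattice_cube n :: (real^'d) set) \<and> card (lattice_cube n :: (real^'d) set) = n ^ CARD('d)"
proof -
  define g where "g = (\<lambda>f::'d \<Rightarrow> nat. \<chi> i. real (f i))"
  have eq: "lattice_cube n = g ` PiE UNIV (\<lambda>_. {0..<n})"
  proof
    show "lattice_cube n \<subseteq> g ` PiE UNIV (\<lambda>_. {0..<n})"
    proof
      fix x :: "real^'d" assume x: "x \<in> lattice_cube n"
      have "\<forall>i. x $ i = real (nat \<lfloor>x $ i\<rfloor>)" proof fix i show "x $ i = real (nat \<lfloor>x $ i\<rfloor>)" using x real_nat_floor[of "x $ i" n] unfolding lattice_cube_def by auto qed
      then have "x = g (\<lambda>i. nat \<lfloor>x $ i\<rfloor>)" unfolding g_def by (simp add: vec_eq_iff)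
      moreover have "\<forall>i. nat \<lfloor>x $ i\<rfloor> < n" proof fix i show "nat \<lfloor>x $ i\<rfloor> < n" using x real_nat_floor[of "x $ i" n] unfolding lattice_cube_def by auto qed
      then have "(\<lambda>i. nat \<lfloor>x $ i\<rfloor>) \<in> PiE UNIV (\<lambda>_. {0..<n})" by (simp add: PiE_iff)
      ultimately show "x \<in> g ` PiE UNIV (\<lambda>_. {0..<n})" by blast
    qed
    show "g ` PiE UNIV (\<lambda>_. {0..<n}) \<subseteq> lattice_cube n"
      unfolding g_def lattice_cube_def by (auto simp: PiE_iff)
  qed
  have inj: "inj_on g (PiE UNIV (\<lambda>_. {0..<n}))"
    unfolding g_def by (auto simp: inj_on_def vec_eq_iff)
  show ?thesis unfolding eq using inj by (simp add: card_image card_PiE finite_PiE)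
qed

lemma cover_lower:
  fixes F :: "(real ^ 'd) set set"
  assumes n: "n \<ge> 1" and k: "k \<le> CARD('d)" and "finite F" "\<forall>S\<in>F. affine S \<and> aff_dim S = int k"
    and cov: "lattice_cube n \<subseteq> \<Union>F"
  shows "n ^ (CARD('d) - k) \<le> card F"
proof -
  have "lattice_cube n = (\<Union>S\<in>F. S \<inter> lattice_cube n)" using cov by auto
  then have "card (lattice_cube n :: (real^'d) set) \<le> (\<Sum>S\<in>F. card (S \<inter> lattice_cube n))"
    using card_UN_le[OF assms(3), of "\<lambda>S. S \<inter> lattice_cube n"] by simp
  also have "\<dots> \<le> (\<Sum>S\<in>F. n ^ k)" using assms(4) flat_card_le by (intro sum_mono) blast
  finally have "n ^ CARD('d) \<le> card F * n ^ k" using cube_card[where 'd='d, of n] by simp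
  moreover have "n ^ CARD('d) = n ^ (CARD('d) - k) * n ^ k" using k by (simp add: power_add[symmetric])
  ultimately show ?thesis using n by simp
qed


lemma cover_upper:
  assumes k: "k \<le> CARD('d::finite)"
  shows "\<exists>\<F> :: (real ^ 'd) set set.
           finite \<F> \<and> card \<F> = n ^ (CARD('d) - k) \<and> (\<forall>S\<in>\<F>. affine S \<and> aff_dim S = int k) \<and>
           lattice_cube n \<subseteq> \<Union>\<F>"
proof -
  obtain J :: "'d set" where J: "card J = CARD('d) - k"
    using obtain_subset_with_card_n[of "CARD('d) - k" "UNIV :: 'd set"] by auto
  define fl where "fl = (\<lambda>a::'d \<Rightarrow> nat. {x::real^'d. \<forall>i\<in>J. x $ i = real (a i)})"
  define P where "P = PiE J (\<lambda>_. {0..<n})"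
  define W where "W = {x::real^'d. \<forall>i. i \<notin> - J \<longrightarrow> x $ i = 0}"
  have subW: "subspace W" unfolding W_def subspace_def by auto
  have dimW: "dim W = k"
  proof -
    have "vec.dim W = card (- J)" unfolding W_def by (rule dim_substandard_cart)
    then have "dim W = card (- J)" by (simp only: dim_vec_eq)
    also have "\<dots> = CARD('d) - card J" by (simp add: Compl_eq_Diff_UNIV card_Diff_subset)
    also have "\<dots> = k" using J k by simp
    finally show ?thesis .
  qed
  have flat: "affine (fl a) \<and> aff_dim (fl a) = int k" for a
  proof -
    define c where "c = (\<chi> i. if i \<in> J then real (a i) else 0)"
    have eq: "fl a = (+) c ` W"
    proof
      show "fl a \<subseteq> (+) c ` W"
      proof
        fix x assume "x \<in> fl a"
        then have "x - c \<in> W" unfolding fl_def W_def c_def by auto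
        then show "x \<in> (+) c ` W" by (metis add.commute diff_add_cancel image_eqI)
      qed
      show "(+) c ` W \<subseteq> fl a" unfolding fl_def W_def c_def by auto
    qed
    have "affine (fl a)" unfolding eq by (intro affine_translation[THEN iffD1] subspace_imp_affine subW)
    moreover have "aff_dim (fl a) = int k" unfolding eq aff_dim_translation_eq
      using aff_dim_subspace[OF subW] dimW by simp
    ultimately show ?thesis by blast
  qed
  have inj: "inj_on fl P"
  proof (rule inj_onI)
    fix a b assume a: "a \<in> P" and b: "b \<in> P" and e: "fl a = fl b"
    define z :: "real^'d" where "z = (\<chi> i. real (a i))"
    have "z \<in> fl a" unfolding z_def fl_def by simp
    then have "z \<in> fl b" using e by simp
    then have "\<forall>i\<in>J. a i = b i" unfolding z_def fl_def by simp
    then show "a = b" using a b unfolding P_def by (auto simp: PiE_iff extensional_def fun_eq_iff)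
  qed
  have finP: "finite P" unfolding P_def by (simp add: finite_PiE)
  have cov: "lattice_cube n \<subseteq> \<Union>(fl ` P)"
  proof
    fix x :: "real^'d" assume x: "x \<in> lattice_cube n"
    have fl1: "\<forall>i. real (nat \<lfloor>x $ i\<rfloor>) = x $ i \<and> nat \<lfloor>x $ i\<rfloor> < n"
    proof fix i show "real (nat \<lfloor>x $ i\<rfloor>) = x $ i \<and> nat \<lfloor>x $ i\<rfloor> < n"
        using x real_nat_floor[of "x $ i" n] unfolding lattice_cube_def by auto qed
    define a where "a = restrict (\<lambda>i. nat \<lfloor>x $ i\<rfloor>) J"
    have "a \<in> P" unfolding a_def P_def using fl1 by (simp add: PiE_iff)
    moreover have "x \<in> fl a" unfolding a_def fl_def using fl1 by simp
    ultimately show "x \<in> \<Union>(fl ` P)" by blast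
  qed
  have "card (fl ` P) = n ^ (CARD('d) - k)"
    using card_image[OF inj] J unfolding P_def by (simp add: card_PiE)
  then show ?thesis using finP cov flat by (intro exI[of _ "fl ` P"]) auto
qed

theorem corollary2:
  fixes n k :: nat
  assumes "n \<ge> 1" and "k \<le> CARD('d::finite)"
  shows "n ^ (CARD('d) - k) = (LEAST m. \<exists>\<F> :: (real ^ 'd) set set.
                    finite \<F> \<and> card \<F> = m \<and> (\<forall>S\<in>\<F>. affine S \<and> aff_dim S = int k) \<and>
                    lattice_cube n \<subseteq> \<Union>\<F>)"
  by (rule Least_equality[symmetric]) (use cover_upper[OF assms(2)] cover_lower[OF assms] in auto)

end
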